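(* Let $T=(V,E)$ be a finite rooted binary tree, $\Pr$ a probability distribution over a finite set of queries, $u\in V$ a node with left child $\ell(u)$ and right child $r(u)$, and $R_u\subseteq T(u)$. Let $R_{r(u)}=T(r(u))\cap R_u$ and $R_{\ell(u)}=T(\ell(u))\cap R_u$. Then for every $v\in A(u)\cup\{\epsilon\}$: $$B_u(R_u\cup\{v\})=\begin{cases}B_u(\{u,v\})+B_{r(u)}(R_{r(u)}\cup\{u\})+B_{\ell(u)}(R_{\ell(u)}\cup\{u\}), & \text{if } u\in R_u,\\ B_{r(u)}(R_{r(u)}\cup\{v\})+B_{\ell(u)}(R_{\ell(u)}\cup\{v\}), & \text{otherwise.}\end{cases}$$
   Context: $T=(V,E)$ is a finite rooted tree in which every node has at most two children. $T(u)$ is the set of nodes of the subtree rooted at $u$ (including $u$); $A(u)$ is the set of proper ancestors of $u$. Each non-leaf node is associated with a variable of a finite set $X$; $\mathrm{vars}(u)$ is the set of variables associated with nodes of $T(u)$. Each query $q$ determines $Z_q\subseteq X$. For $R\subseteq V$, $w\in V$: $I_q(w,R)=1$ iff $w\in R$, $\mathrm{vars}(w)\subseteq Z_q$, and no $x\in A(w)\cap R$ has $\mathrm{vars}(x)\subseteq Z_q$; else $0$; $\mathbb{E}[I(w,R)]=\sum_q\Pr(q)I_q(w,R)$. Nodes have partial costs $c(x)$; total cost $C(w)=\sum_{x\in T(w)}c(x)$. Partial benefit: $B_u(R)=\sum_{w\in R\cap T(u)}\mathbb{E}[I(w,R)]C(w)$. $\epsilon$ is an auxiliary symbol not in $V$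 (meaning "no ancestor selected"), and by convention $\epsilon$ is ignored in set arguments: $B_u(S\cup\{\epsilon\}):=B_u(S)$. *)

theory Defs
  imports Complex_Main
begin

definition rooted_binary_tree :: "'v set \<Rightarrow> ('v \<times> 'v) set \<Rightarrow> 'v \<Rightarrow> bool" where
  "rooted_binary_tree V E rt \<longleftrightarrow>
     finite V \<and> rt \<in> V \<and> E \<subseteq> V \<times> V \<and>
     (\<forall>w\<in>V. (rt, w) \<in> E\<^sup>*) \<and>
     (\<forall>w. (w, rt) \<notin> E) \<and>
     (\<forall>w\<in>V. w \<noteq> rt \<longrightarrow> (\<exists>!p. (p, w) \<in> E)) \<and>
     (\<forall>u\<in>V. card {w. (u, w) \<in> E} \<le> 2)"

definition subtree :: "('v \<times> 'v) set \<Rightarrow> 'v \<Rightarrow> 'v set" where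
  "subtree E u = {w. (u, w) \<in> E\<^sup>*}"

definition ancestors :: "('v \<times> 'v) set \<Rightarrow> 'v \<Rightarrow> 'v set" where
  "ancestors E u = {x. (x, u) \<in> E\<^sup>+}"

definition is_leaf :: "('v \<times> 'v) set \<Rightarrow> 'v \<Rightarrow> bool" where
  "is_leaf E u \<longleftrightarrow> (\<forall>w. (u, w) \<notin> E)"

definition vars :: "('v \<times> 'v) set \<Rightarrow> ('v \<Rightarrow> 'x) \<Rightarrow> 'v \<Rightarrow> 'x set" where
  "vars E var u = var ` {x \<in> subtree E u. \<not> is_leaf E x}"

definition Iq :: "('v \<times> 'v) set \<Rightarrow> ('v \<Rightarrow> 'x) \<Rightarrow> ('q \<Rightarrow> 'x set) \<Rightarrow> 'q \<Rightarrow> 'v \<Rightarrow> 'v set \<Rightarrow> bool" where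
  "Iq E var Z q w R \<longleftrightarrow>
     w \<in> R \<and> vars E var w \<subseteq> Z q \<and>
     \<not> (\<exists>x \<in> ancestors E w \<inter> R. vars E var x \<subseteq> Z q)"

definition EI :: "'q set \<Rightarrow> ('q \<Rightarrow> real) \<Rightarrow> ('v \<times> 'v) set \<Rightarrow> ('v \<Rightarrow> 'x) \<Rightarrow> ('q \<Rightarrow> 'x set)
    \<Rightarrow> 'v \<Rightarrow> 'v set \<Rightarrow> real" where
  "EI Q P E var Z w R = (\<Sum>q\<in>Q. P q * (if Iq E var Z q w R then 1 else 0))"

definition Ctot :: "('v \<times> 'v) set \<Rightarrow> ('v \<Rightarrow> real) \<Rightarrow> 'v \<Rightarrow> real" where
  "Ctot E c w = (\<Sum>x\<in>subtree E w. c x)"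

definition Bu :: "'q set \<Rightarrow> ('q \<Rightarrow> real) \<Rightarrow> ('v \<times> 'v) set \<Rightarrow> ('v \<Rightarrow> 'x) \<Rightarrow> ('q \<Rightarrow> 'x set)
    \<Rightarrow> ('v \<Rightarrow> real) \<Rightarrow> 'v \<Rightarrow> 'v set \<Rightarrow> real" where
  "Bu Q P E var Z c u R = (\<Sum>w\<in>R \<inter> subtree E u. EI Q P E var Z w R * Ctot E c w)"

end

theory Submission
  imports Defs
begin

lemma rbt_parent_unique:
  assumes T: "rooted_binary_tree V E rt" and "(p, w) \<in> E" "(q, w) \<in> E"
  shows "p = q"
proof -
  have "w \<in> V" "w \<noteq> rt" using T assms(2) unfolding rooted_binary_tree_def by blast+
  then show ?thesis using T assms(2,3) unfolding rooted_binary_tree_def by blast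
qed

lemma rbt_acyc:
  assumes T: "rooted_binary_tree V E rt"
  shows "(x, x) \<notin> E\<^sup>+"
proof
  assume xx: "(x, x) \<in> E\<^sup>+"
  have EV: "E \<subseteq> V \<times> V" and reach: "\<forall>w\<in>V. (rt, w) \<in> E\<^sup>*" and nor: "\<forall>w. (w, rt) \<notin> E"
    using T unfolding rooted_binary_tree_def by blast+
  obtain p where "(p, x) \<in> E" using xx by (meson tranclD2)
  then have "x \<in> V" using EV by blast
  then obtain n where "(rt, x) \<in> E ^^ n" using reach rtrancl_power by blast
  then show False using xx
  proof (induction n arbitrary: x)
    case 0
    then have "x = rt" by simp
    then show ?case using 0 nor by (meson tranclD2)
  next
    case (Suc n)
    then obtain y where y: "(rt, y) \<in> E ^^ n" "(y, x) \<in> E" by auto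
    obtain p where p: "(x, p) \<in> E\<^sup>*" "(p, x) \<in> E" using Suc.prems(2) by (meson tranclD2)
    have "p = y" using rbt_parent_unique[OF T p(2) y(2)] .
    then have "(y, y) \<in> E\<^sup>+" using p y(2) by (meson rtrancl_into_trancl2)
    then show ?case using Suc.IH y(1) by blast
  qed
qed

lemma rbt_comparable:
  assumes T: "rooted_binary_tree V E rt" and "(x, p) \<in> E\<^sup>*"
  shows "(y, p) \<in> E\<^sup>* \<Longrightarrow> (x, y) \<in> E\<^sup>* \<or> (y, x) \<in> E\<^sup>*"
  using assms(2)
proof (induction arbitrary: y rule: rtrancl_induct)
  case base
  then show ?case by simp
next
  case (step p' p)
  from step.prems show ?case
  proof (cases rule: rtranclE)
    case base
    then show ?thesis using step.hyps by (meson rtrancl.rtrancl_into_rtrancl)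
  next
    case (step q)
    then have "q = p'" using rbt_parent_unique[OF T] step.hyps(2) by blast
    then show ?thesis using step.IH step by blast
  qed
qed

lemma rbt_subtree_V:
  assumes T: "rooted_binary_tree V E rt" and "u \<in> V"
  shows "subtree E u \<subseteq> V"
proof
  fix w assume "w \<in> subtree E u"
  then have "(u, w) \<in> E\<^sup>*" by (simp add: subtree_def)
  then show "w \<in> V"
    using T assms(2) unfolding rooted_binary_tree_def by (induction rule: rtrancl_induct) auto
qed

theorem lemma4:
  fixes V :: "'v set" and E :: "('v \<times> 'v) set" and rt :: 'v
    and X :: "'x set" and var :: "'v \<Rightarrow> 'x"
    and Q :: "'q set" and P :: "'q \<Rightarrow> real" and Z :: "'q \<Rightarrow> 'x set"
    and c :: "'v \<Rightarrow> real"
    and u l r :: 'v and Ru :: "'v set" and v :: "'v option"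
  assumes tree: "rooted_binary_tree V E rt"
    and X: "finite X" "\<forall>x\<in>V. \<not> is_leaf E x \<longrightarrow> var x \<in> X"
    and Q: "finite Q" "\<forall>q\<in>Q. P q \<ge> 0" "(\<Sum>q\<in>Q. P q) = 1" "\<forall>q\<in>Q. Z q \<subseteq> X"
    and u: "u \<in> V" "(u, l) \<in> E" "(u, r) \<in> E" "l \<noteq> r"
    and Ru: "Ru \<subseteq> subtree E u"
    and v: "\<forall>a. v = Some a \<longrightarrow> a \<in> ancestors E u"
  shows "Bu Q P E var Z c u (Ru \<union> set_option v) =
    (if u \<in> Ru then
       Bu Q P E var Z c u ({u} \<union> set_option v)
       + Bu Q P E var Z c r ((subtree E r \<inter> Ru) \<union> {u})
       + Bu Q P E var Z c l ((subtree E l \<inter> Ru) \<union> {u})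
     else
       Bu Q P E var Z c r ((subtree E r \<inter> Ru) \<union> set_option v)
       + Bu Q P E var Z c l ((subtree E l \<inter> Ru) \<union> set_option v))"
proof -
  define S where "S = Ru \<union> set_option v"
  define Rr where "Rr = subtree E r \<inter> Ru"
  define Rl where "Rl = subtree E l \<inter> Ru"
  have acyc: "\<And>x. (x, x) \<notin> E\<^sup>+" using rbt_acyc[OF tree] .
  have EV: "E \<subseteq> V \<times> V" "finite V" using tree unfolding rooted_binary_tree_def by blast+
  have finRu: "finite Ru" using finite_subset[OF subset_trans[OF Ru rbt_subtree_V[OF tree u(1)]] EV(2)] .
  have vanc: "\<And>a. a \<in> set_option v \<Longrightarrow> (a, u) \<in> E\<^sup>+" using v by (auto simp: ancestors_def)
  have vnot: "\<And>a. a \<in> set_option v \<Longrightarrow> a \<notin> subtree E u"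
    using vanc acyc unfolding subtree_def by (meson mem_Collect_eq trancl_rtrancl_trancl)
  have sub_l: "subtree E l \<subseteq> subtree E u" and sub_r: "subtree E r \<subseteq> subtree E u"
    using u unfolding subtree_def by (auto intro: converse_rtrancl_into_rtrancl)
  have u_nl: "u \<notin> subtree E l" and u_nr: "u \<notin> subtree E r"
    using u acyc unfolding subtree_def by (meson mem_Collect_eq rtrancl_into_trancl2)+
  have children: "\<And>w. (u, w) \<in> E \<Longrightarrow> w = l \<or> w = r"
  proof -
    fix w assume uw: "(u, w) \<in> E"
    have fin: "finite {w. (u, w) \<in> E}"
    proof (rule finite_subset[OF _ EV(2)])
      show "{w. (u, w) \<in> E} \<subseteq> V" using EV(1) by blast
    qed
    have c2: "card {w. (u, w) \<in> E} \<le> 2" using tree u(1) unfolding rooted_binary_tree_def by blast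
    show "w = l \<or> w = r"
    proof (rule ccontr)
      assume "\<not> (w = l \<or> w = r)"
      then have "{l, r, w} \<subseteq> {w. (u, w) \<in> E}" "card {l, r, w} = 3" using uw u by auto
      then have "3 \<le> card {w. (u, w) \<in> E}" using fin by (metis card_mono)
      then show False using c2 by simp
    qed
  qed
  have Tu: "subtree E u = {u} \<union> subtree E l \<union> subtree E r"
  proof
    show "subtree E u \<subseteq> {u} \<union> subtree E l \<union> subtree E r"
    proof
      fix w assume "w \<in> subtree E u"
      then have "(u, w) \<in> E\<^sup>*" by (simp add: subtree_def)
      then show "w \<in> {u} \<union> subtree E l \<union> subtree E r"
      proof (cases rule: converse_rtranclE)
        case (step c)
        then show ?thesis using children by (auto simp: subtree_def)
      qed simp
    qed
  qed (use sub_l sub_r in \<open>auto simp: subtree_def\<close>)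
  have lr_disj: "subtree E l \<inter> subtree E r = {}"
  proof (rule ccontr)
    assume "subtree E l \<inter> subtree E r \<noteq> {}"
    then obtain w where "(l, w) \<in> E\<^sup>*" "(r, w) \<in> E\<^sup>*" by (auto simp: subtree_def)
    then have "(l, r) \<in> E\<^sup>* \<or> (r, l) \<in> E\<^sup>*" using rbt_comparable[OF tree] by blast
    then show False
    proof
      assume "(l, r) \<in> E\<^sup>*"
      then show False
      proof (cases rule: rtranclE)
        case (step q)
        then have "q = u" using rbt_parent_unique[OF tree] u(3) by blast
        then show False using step u(2) acyc by (meson rtrancl_into_trancl2)
      qed (use u in simp)
    next
      assume "(r, l) \<in> E\<^sup>*"
      then show False
      proof (cases rule: rtranclE)
        case (step q)
        then have "q = u" using rbt_parent_unique[OF tree] u(2) by blast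
        then show False using step u(3) acyc by (meson rtrancl_into_trancl2)
      qed (use u in simp)
    qed
  qed
  have anc_in: "x = u \<or> x \<in> subtree E ch"
    if ch: "(u, ch) \<in> E" and w: "w \<in> subtree E ch" and xw: "(x, w) \<in> E\<^sup>+" and xu: "x \<in> subtree E u"
    for x w ch
  proof -
    have "(x, w) \<in> E\<^sup>*" "(ch, w) \<in> E\<^sup>*" using xw w by (auto simp: subtree_def)
    then have "(x, ch) \<in> E\<^sup>* \<or> (ch, x) \<in> E\<^sup>*" using rbt_comparable[OF tree] by blast
    then show ?thesis
    proof
      assume "(x, ch) \<in> E\<^sup>*"
      then show ?thesis
      proof (cases rule: rtranclE)
        case base then show ?thesis by (simp add: subtree_def)
      next
        case (step q)
        then have "q = u" using rbt_parent_unique[OF tree] ch by blast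
        then have "(x, u) \<in> E\<^sup>*" using step by simp
        moreover have "(u, x) \<in> E\<^sup>*" using xu by (simp add: subtree_def)
        ultimately show ?thesis using acyc by (metis rtranclD rtrancl_trancl_trancl)
      qed
    qed (simp add: subtree_def)
  qed
  have anc_notu: "ancestors E u \<inter> subtree E u = {}"
  proof -
    { fix x assume "(x, u) \<in> E\<^sup>+" "(u, x) \<in> E\<^sup>*"
      then have "(x, x) \<in> E\<^sup>+" by (rule trancl_rtrancl_trancl)
      then have False using acyc by blast }
    then show ?thesis unfolding ancestors_def subtree_def by blast
  qed
  have varsmono: "vars E var u \<subseteq> vars E var a" if "a \<in> set_option v" for a
  proof -
    have au: "(a, u) \<in> E\<^sup>*" using vanc[OF that] by (rule trancl_into_rtrancl)
    have "subtree E u \<subseteq> subtree E a" unfolding subtree_def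
      using rtrancl_trans[OF au] by blast
    then show ?thesis unfolding vars_def by blast
  qed
  have EIcong: "EI Q P E var Z w R = EI Q P E var Z w R'"
    if "\<And>q. Iq E var Z q w R = Iq E var Z q w R'" for w R R'
    unfolding EI_def using that by simp
  have uanc: "u \<in> ancestors E w" if "(u, ch) \<in> E" "w \<in> subtree E ch" for w ch
    using that unfolding ancestors_def subtree_def by (simp add: rtrancl_into_trancl2)
  have child_in: "EI Q P E var Z w S = EI Q P E var Z w (subtree E ch \<inter> Ru \<union> {u})"
    if uR: "u \<in> Ru" and ch: "(u, ch) \<in> E" and w: "w \<in> subtree E ch \<inter> Ru" for w ch
  proof (rule EIcong)
    fix q
    have A: "(\<exists>x\<in>ancestors E w \<inter> S. vars E var x \<subseteq> Z q) \<longleftrightarrow>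
          (\<exists>x\<in>ancestors E w \<inter> (subtree E ch \<inter> Ru \<union> {u}). vars E var x \<subseteq> Z q)"
    proof
      assume "\<exists>x\<in>ancestors E w \<inter> S. vars E var x \<subseteq> Z q"
      then obtain x where x: "x \<in> ancestors E w" "x \<in> S" "vars E var x \<subseteq> Z q" by blast
      show "\<exists>x\<in>ancestors E w \<inter> (subtree E ch \<inter> Ru \<union> {u}). vars E var x \<subseteq> Z q"
      proof (cases "x \<in> Ru")
        case True
        then have "x = u \<or> x \<in> subtree E ch"
          using anc_in[OF ch, of w x] w x(1) Ru unfolding ancestors_def by blast
        then show ?thesis using x True by blast
      next
        case False
        then have "x \<in> set_option v" using x(2) S_def by blast
        then have "vars E var u \<subseteq> Z q" using varsmono x(3) by blast
        then show ?thesis using uanc[OF ch] w by blast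
      qed
    next
      assume "\<exists>x\<in>ancestors E w \<inter> (subtree E ch \<inter> Ru \<union> {u}). vars E var x \<subseteq> Z q"
      then show "\<exists>x\<in>ancestors E w \<inter> S. vars E var x \<subseteq> Z q" using uR S_def by blast
    qed
    have "w \<in> S" using w S_def by blast
    then show "Iq E var Z q w S = Iq E var Z q w (subtree E ch \<inter> Ru \<union> {u})"
      unfolding Iq_def using A w by blast
  qed
  have child_out: "EI Q P E var Z w S = EI Q P E var Z w (subtree E ch \<inter> Ru \<union> set_option v)"
    if uR: "u \<notin> Ru" and ch: "(u, ch) \<in> E" and w: "w \<in> subtree E ch \<inter> Ru" for w ch
  proof (rule EIcong)
    fix q
    have A: "ancestors E w \<inter> S = ancestors E w \<inter> (subtree E ch \<inter> Ru \<union> set_option v)"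
    proof -
      have "x \<in> subtree E ch" if "x \<in> ancestors E w" "x \<in> Ru" for x
        using anc_in[OF ch, of w x] w that Ru uR unfolding ancestors_def by blast
      then show ?thesis unfolding S_def by blast
    qed
    have "w \<in> S" using w S_def by blast
    then show "Iq E var Z q w S = Iq E var Z q w (subtree E ch \<inter> Ru \<union> set_option v)"
      unfolding Iq_def using A w by auto
  qed
  have u_eq: "EI Q P E var Z u S = EI Q P E var Z u ({u} \<union> set_option v)" if uR: "u \<in> Ru"
  proof (rule EIcong)
    fix q
    have "u \<notin> ancestors E u" using acyc unfolding ancestors_def by blast
    then have A: "ancestors E u \<inter> S = ancestors E u \<inter> ({u} \<union> set_option v)"
      using anc_notu Ru unfolding S_def by blast
    show "Iq E var Z q u S = Iq E var Z q u ({u} \<union> set_option v)"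
      unfolding Iq_def using A uR S_def by auto
  qed
  have finRr: "finite Rr" and finRl: "finite Rl" using finRu Rr_def Rl_def by auto
  have S_int: "S \<inter> subtree E u = Ru" using vnot Ru S_def by blast
  have Ru_split: "Ru = (Ru \<inter> {u}) \<union> Rr \<union> Rl" using Ru Tu Rr_def Rl_def by blast
  have dRlr: "Rr \<inter> Rl = {}" using lr_disj Rr_def Rl_def by blast
  have dRu: "(Ru \<inter> {u}) \<inter> (Rr \<union> Rl) = {}" using u_nl u_nr Rr_def Rl_def by blast
  define f where "f w = EI Q P E var Z w S * Ctot E c w" for w
  have LHS: "Bu Q P E var Z c u S = sum f (Ru \<inter> {u}) + sum f Rr + sum f Rl"
  proof -
    have "Bu Q P E var Z c u S = sum f Ru" unfolding Bu_def S_int f_def ..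
    also have "\<dots> = sum f (Ru \<inter> {u}) + sum f (Rr \<union> Rl)"
    proof -
      have "sum f (Ru \<inter> {u} \<union> (Rr \<union> Rl)) = sum f (Ru \<inter> {u}) + sum f (Rr \<union> Rl)"
        using sum.union_disjoint[OF _ _ dRu, of f] finRr finRl by simp
      moreover have "Ru \<inter> {u} \<union> (Rr \<union> Rl) = Ru" using Ru_split by blast
      ultimately show ?thesis by simp
    qed
    also have "sum f (Rr \<union> Rl) = sum f Rr + sum f Rl"
      using sum.union_disjoint[OF finRr finRl dRlr] .
    finally show ?thesis by simp
  qed
  have Rr_sub: "Rr \<subseteq> subtree E r" and Rl_sub: "Rl \<subseteq> subtree E l" using Rr_def Rl_def by auto
  have vnr: "set_option v \<inter> subtree E r = {}" and vnl: "set_option v \<inter> subtree E l = {}"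
    using vnot sub_r sub_l by blast+
  show ?thesis
  proof (cases "u \<in> Ru")
    case True
    have Bu_u: "Bu Q P E var Z c u ({u} \<union> set_option v) = sum f (Ru \<inter> {u})"
    proof -
      have "({u} \<union> set_option v) \<inter> subtree E u = {u}" using vnot by (auto simp: subtree_def)
      moreover have "Ru \<inter> {u} = {u}" using True by blast
      ultimately show ?thesis unfolding Bu_def f_def using u_eq[OF True] by simp
    qed
    have Bu_r: "Bu Q P E var Z c r (Rr \<union> {u}) = sum f Rr"
    proof -
      have "(Rr \<union> {u}) \<inter> subtree E r = Rr" using Rr_sub u_nr by blast
      then show ?thesis unfolding Bu_def f_def
        using child_in[OF True u(3)] Rr_def by (auto intro!: sum.cong)
    qed
    have Bu_l: "Bu Q P E var Z c l (Rl \<union> {u}) = sum f Rl"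
    proof -
      have "(Rl \<union> {u}) \<inter> subtree E l = Rl" using Rl_sub u_nl by blast
      then show ?thesis unfolding Bu_def f_def
        using child_in[OF True u(2)] Rl_def by (auto intro!: sum.cong)
    qed
    show ?thesis using True LHS Bu_u Bu_r Bu_l unfolding S_def Rr_def Rl_def by simp
  next
    case False
    have Bu_r: "Bu Q P E var Z c r (Rr \<union> set_option v) = sum f Rr"
    proof -
      have "(Rr \<union> set_option v) \<inter> subtree E r = Rr" using Rr_sub vnr by blast
      then show ?thesis unfolding Bu_def f_def
        using child_out[OF False u(3)] Rr_def by (auto intro!: sum.cong)
    qed
    have Bu_l: "Bu Q P E var Z c l (Rl \<union> set_option v) = sum f Rl"
    proof -
      have "(Rl \<union> set_option v) \<inter> subtree E l = Rl" using Rl_sub vnl by blast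
      then show ?thesis unfolding Bu_def f_def
        using child_out[OF False u(2)] Rl_def by (auto intro!: sum.cong)
    qed
    have "Ru \<inter> {u} = {}" using False by blast
    then show ?thesis using False LHS Bu_r Bu_l unfolding S_def Rr_def Rl_def by simp
  qed
qed

end
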